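(* Let $f:V\to W$ be as in the context (with $n+1\ge 4$, $b\neq 0$, $c\neq 0$, and $A$ the companion matrix of the minimal polynomial over $\mathbb{F}_p$ of a primitive element of $\mathrm{GF}(p^n)$). Then the group $$G=\{g\in \mathrm{GL}(V) : (vg)f=(vf)\widehat{g}\ \text{for all } v\in V\}$$ is trivial, i.e. $G=\{1\}$.
   Context: Let $p$ be a prime, $\mathbb{F}=\mathrm{GF}(p)$, and $n\ge 3$. Let $V$ be an $\mathbb{F}$-vector space of dimension $n+1$ with basis $v_0,v_1,\dots,v_n$, and let $U=\langle v_1,\dots,v_n\rangle$. Let $W=\Lambda^2V$ be the exterior square, with ordered basis beginning $v_0\wedge v_1,\dots,v_0\wedge v_n$ and continuing with the $v_i\wedge v_j$, $1\le i<j\le n$ (in a fixed order). Maps are written on the right and vectors are row vectors. For $g\in\mathrm{End}(V)$, $\widehat{g}$ denotes the induced linear map of $W$, $(x\wedge y)\widehat g=(xg)\wedge(yg)$. The linear map $f:V\to W$ has, with respect to these bases, block matrix $\begin{bmatrix} b & c\\ A & 0\end{bmatrix}$, i.e. $v_0f=\sum_{i=1}^n b_i\, v_0\wedge v_i+\sum_{1\le j<k\le n}c_{j,k}\, v_j\wedge v_k$ and $v_if=\sum_{j=1}^n A_{i,j}\, v_0\wedge v_j$ for $1\le i\le n$, where $b\in\mathbb{F}^{n}$ is a nonzero row vector, $c\in\mathbb{F}^{\binom n2}$ is a nonzero row vector, and $A$ is the $n\times n$ companion matrix of the minimal polynomial $m$ over $\mathbb{F}$ of a primitive element $\alpha$ (generator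 of the multiplicative group) of $\mathrm{GF}(p^n)$. *)

theory Defs
  imports "Jordan_Normal_Form.Matrix" "HOL-Computational_Algebra.Polynomial"
begin

text \<open>V = F^(n+1) with basis v_0,...,v_n (indices 0..n); vectors are row
vectors (JNF vectors of dimension n+1) and matrices act on the right.
W = Lambda^2 V is represented by coordinate functions on the index pairs (j,k),
0 <= j < k <= n, the coordinate at (j,k) being the coefficient of v_j wedge v_k.\<close>

definition wpairs :: "nat \<Rightarrow> (nat \<times> nat) set" where
  "wpairs n = {(j,k). j < k \<and> k \<le> n}"

definition rmult :: "'a::comm_ring_1 vec \<Rightarrow> 'a mat \<Rightarrow> 'a vec" where
  "rmult v g = vec (dim_col g) (\<lambda>j. \<Sum>i<dim_vec v. v $ i * g $$ (i, j))"

definition wedge :: "'a::comm_ring_1 vec \<Rightarrow> 'a vec \<Rightarrow> nat \<times> nat \<Rightarrow> 'a" where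
  "wedge x y = (\<lambda>(k,l). x $ k * y $ l - x $ l * y $ k)"

definition hat :: "nat \<Rightarrow> 'a::comm_ring_1 mat \<Rightarrow> (nat \<times> nat \<Rightarrow> 'a) \<Rightarrow> (nat \<times> nat \<Rightarrow> 'a)" where
  "hat n g w = (\<lambda>kl. \<Sum>(i,j)\<in>wpairs n. w (i,j) * wedge (row g i) (row g j) kl)"

text \<open>The map f : V -> W with block matrix [b c; A 0]. Here b is indexed by 1..n
(b i = b_i), A is an n x n JNF matrix with A $$ (i-1,j-1) = A_{i,j}, and
c j k = c_{j,k} for 1 <= j < k <= n.\<close>
definition fmap :: "nat \<Rightarrow> (nat \<Rightarrow> 'a::comm_ring_1) \<Rightarrow> (nat \<Rightarrow> nat \<Rightarrow> 'a) \<Rightarrow> 'a mat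
     \<Rightarrow> 'a vec \<Rightarrow> (nat \<times> nat \<Rightarrow> 'a)" where
  "fmap n b c A v = (\<lambda>(j,k).
     if j = 0 then v $ 0 * b k + (\<Sum>i\<in>{1..n}. v $ i * A $$ (i - 1, k - 1))
     else v $ 0 * c j k)"

text \<open>Companion matrix (row-vector convention) of a monic polynomial m of degree n:
row i (0-based, i < n-1) is the unit vector e_(i+1), and the last row is
(-m_0, ..., -m_(n-1)).\<close>
definition companion_mat :: "'a::comm_ring_1 poly \<Rightarrow> 'a mat" where
  "companion_mat m = (let n = degree m in
     mat n n (\<lambda>(i,j). if i + 1 < n then (if j = i + 1 then 1 else 0)
                      else - coeff m j))"

definition primitive_element :: "'b::field \<Rightarrow> bool" where
  "primitive_element \<alpha> \<longleftrightarrow> (\<forall>y. y \<noteq> 0 \<longrightarrow> (\<exists>k::nat. y = \<alpha> ^ k))"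

definition field_embedding :: "('a::field \<Rightarrow> 'b::field) \<Rightarrow> bool" where
  "field_embedding e \<longleftrightarrow> e 1 = 1 \<and> (\<forall>x y. e (x + y) = e x + e y) \<and> (\<forall>x y. e (x * y) = e x * e y)"

definition is_min_poly :: "('a::field \<Rightarrow> 'b::field) \<Rightarrow> 'b \<Rightarrow> 'a poly \<Rightarrow> bool" where
  "is_min_poly e \<alpha> m \<longleftrightarrow> lead_coeff m = 1 \<and> poly (map_poly e m) \<alpha> = 0 \<and>
     (\<forall>q. q \<noteq> 0 \<longrightarrow> poly (map_poly e q) \<alpha> = 0 \<longrightarrow> degree m \<le> degree q)"

end

theory Submission
  imports Defs "HOL-Library.FuncSet" "Jordan_Normal_Form.Determinant" begin
lemma emb_0: "field_embedding e \<Longrightarrow> e 0 = 0"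
  unfolding field_embedding_def by (metis add_cancel_right_right add_0)

lemma emb_add: "field_embedding e \<Longrightarrow> e (x + y) = e x + e y"
  unfolding field_embedding_def by blast

lemma emb_mult: "field_embedding e \<Longrightarrow> e (x * y) = e x * e y"
  unfolding field_embedding_def by blast

lemma emb_1: "field_embedding e \<Longrightarrow> e 1 = 1"
  unfolding field_embedding_def by blast

lemma emb_uminus: "field_embedding e \<Longrightarrow> e (- x) = - e x"
proof -
  assume e: "field_embedding e"
  have "e (- x) + e x = 0" by (metis e emb_0 emb_add add.left_inverse)
  then show ?thesis by (simp add: eq_neg_iff_add_eq_0)
qed

lemma emb_diff: "field_embedding e \<Longrightarrow> e (x - y) = e x - e y"
  by (metis diff_conv_add_uminus emb_add emb_uminus)

lemma emb_eq0: 
  fixes e :: "'a::field \<Rightarrow> 'b::field"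
  shows "field_embedding e \<Longrightarrow> e x = 0 \<longleftrightarrow> x = 0"
  by (metis emb_0 emb_1 emb_mult mult_zero_left right_inverse zero_neq_one)

lemma emb_power: "field_embedding e \<Longrightarrow> e (x ^ k) = e x ^ k"
  by (induction k) (auto simp: emb_1 emb_mult)

lemma emb_sum: "field_embedding e \<Longrightarrow> e (\<Sum>i\<in>S. f i) = (\<Sum>i\<in>S. e (f i))"
  by (induction S rule: infinite_finite_induct) (auto simp: emb_0 emb_add)

lemma poly_map_sum:
  fixes e :: "'a::field \<Rightarrow> 'b::field"
  assumes e: "field_embedding e" and d: "degree q \<le> k"
  shows "poly (map_poly e q) \<alpha> = (\<Sum>i\<le>k. e (coeff q i) * \<alpha> ^ i)"
proof -
  have deg: "degree (map_poly e q) = degree q"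
    by (rule degree_map_poly) (simp add: emb_eq0[OF e])
  have "poly (map_poly e q) \<alpha> = (\<Sum>i\<le>degree q. e (coeff q i) * \<alpha> ^ i)"
    unfolding poly_altdef deg by (simp add: coeff_map_poly emb_0[OF e])
  also have "\<dots> = (\<Sum>i\<le>k. e (coeff q i) * \<alpha> ^ i)"
    by (rule sum.mono_neutral_left) (use d in \<open>auto simp: coeff_eq_0 emb_0[OF e]\<close>)
  finally show ?thesis .
qed

lemma mkpoly:
  fixes e :: "'a::field \<Rightarrow> 'b::field"
  assumes e: "field_embedding e" and k: "k \<ge> 1"
  shows "\<exists>q. (\<forall>j. coeff q j = (if j < k then u j else 0)) \<and> degree q < k \<and>
           poly (map_poly e q) \<alpha> = (\<Sum>j<k. e (u j) * \<alpha> ^ j)"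
proof -
  define q where "q = Poly (map u [0..<k])"
  have c: "coeff q j = (if j < k then u j else 0)" for j
    by (simp add: q_def nth_default_def)
  have dq: "degree q \<le> k - 1"
    by (rule degree_le) (use k in \<open>auto simp: c\<close>)
  have "poly (map_poly e q) \<alpha> = (\<Sum>i\<le>k-1. e (coeff q i) * \<alpha> ^ i)"
    by (rule poly_map_sum[OF e dq])
  also have "{..k-1} = {..<k}" using k by auto
  finally show ?thesis using c dq k by (intro exI[of _ q]) auto
qed

lemma min_poly_inj:
  fixes e :: "'a::field \<Rightarrow> 'b::field"
  assumes e: "field_embedding e" and mp: "is_min_poly e \<alpha> m" and k: "k \<ge> 1" "k \<le> degree m"
    and z: "(\<Sum>j<k. e (u j) * \<alpha> ^ j) = 0" and j: "j < k"
  shows "u j = 0"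
proof (rule ccontr)
  assume nz: "u j \<noteq> 0"
  obtain q where q: "\<forall>j. coeff q j = (if j < k then u j else 0)" "degree q < k"
     "poly (map_poly e q) \<alpha> = (\<Sum>j<k. e (u j) * \<alpha> ^ j)"
    using mkpoly[OF e k(1)] by blast
  have "q \<noteq> 0" using q(1) nz j by (metis coeff_0)
  then have "degree m \<le> degree q" using mp q(3) z unfolding is_min_poly_def by auto
  with q(2) k show False by auto
qed

lemma shift_sum:
  fixes e :: "'a::field \<Rightarrow> 'b::field"
  assumes e: "field_embedding e" and d: "d = Suc d'"
    and rel: "\<alpha> ^ d = - (\<Sum>j<d. e (mc j) * \<alpha> ^ j)"
  shows "(\<Sum>j<d. e ((if j = 0 then 0 else u (j - 1)) - u d' * mc j) * \<alpha> ^ j)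
         = \<alpha> * (\<Sum>j<d. e (u j) * \<alpha> ^ j)"
proof -
  have "(\<Sum>j<d. e ((if j = 0 then 0 else u (j - 1)) - u d' * mc j) * \<alpha> ^ j)
     = (\<Sum>j<d. e (if j = 0 then 0 else u (j - 1)) * \<alpha> ^ j) - e (u d') * (\<Sum>j<d. e (mc j) * \<alpha> ^ j)"
    by (simp add: emb_diff[OF e] emb_mult[OF e] left_diff_distrib sum_subtractf sum_distrib_left mult.assoc)
  also have "(\<Sum>j<d. e (if j = 0 then 0 else u (j - 1)) * \<alpha> ^ j) = (\<Sum>j<d'. e (u j) * \<alpha> ^ Suc j)"
    unfolding d sum.lessThan_Suc_shift by (simp add: emb_0[OF e])
  also have "e (u d') * (\<Sum>j<d. e (mc j) * \<alpha> ^ j) = - (e (u d') * \<alpha> ^ d)"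
    using rel by simp
  finally have 1: "(\<Sum>j<d. e ((if j = 0 then 0 else u (j - 1)) - u d' * mc j) * \<alpha> ^ j) =
     (\<Sum>j<d'. e (u j) * \<alpha> ^ Suc j) + e (u d') * \<alpha> ^ d" by simp
  have "\<alpha> * (\<Sum>j<d. e (u j) * \<alpha> ^ j) = (\<Sum>j<d'. e (u j) * \<alpha> ^ Suc j) + e (u d') * \<alpha> ^ d"
    unfolding d by (simp add: sum_distrib_left distrib_left algebra_simps)
  with 1 show ?thesis by simp
qed

lemma min_poly_rel:
  fixes e :: "'a::field \<Rightarrow> 'b::field"
  assumes e: "field_embedding e" and mp: "is_min_poly e \<alpha> m"
  shows "\<alpha> ^ degree m = - (\<Sum>j<degree m. e (coeff m j) * \<alpha> ^ j)"
proof -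
  have "0 = poly (map_poly e m) \<alpha>" using mp unfolding is_min_poly_def by simp
  also have "\<dots> = (\<Sum>i\<le>degree m. e (coeff m i) * \<alpha> ^ i)" by (rule poly_map_sum[OF e]) simp
  also have "\<dots> = (\<Sum>i<degree m. e (coeff m i) * \<alpha> ^ i) + \<alpha> ^ degree m"
    using mp unfolding is_min_poly_def by (simp add: lessThan_Suc_atMost[symmetric] emb_1[OF e])
  finally show ?thesis by (simp add: eq_neg_iff_add_eq_0 add.commute)
qed

lemma degree_min_poly:
  fixes e :: "'a::{finite,field} \<Rightarrow> 'b::{finite,field}"
  assumes p: "prime p" and ca: "card (UNIV :: 'a set) = p" and cb: "card (UNIV :: 'b set) = p ^ n"
    and e: "field_embedding e" and pr: "primitive_element \<alpha>" and mp: "is_min_poly e \<alpha> m"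
  shows "degree m = n"
proof -
  let ?d = "degree m"
  have p1: "p > 1" using p prime_gt_1_nat by blast
  have d1: "?d \<ge> 1"
  proof (rule ccontr)
    assume "\<not> ?d \<ge> 1"
    then have "?d = 0" by simp
    then have "poly (map_poly e m) \<alpha> = e (coeff m 0)" using poly_map_sum[OF e, of m 0 \<alpha>] by simp
    also have "coeff m 0 = 1" using mp \<open>?d = 0\<close> unfolding is_min_poly_def by simp
    finally show False using mp e unfolding is_min_poly_def by (simp add: emb_1)
  qed
  have rel: "\<alpha> ^ ?d = - (\<Sum>j<?d. e (coeff m j) * \<alpha> ^ j)" by (rule min_poly_rel[OF e mp])
  obtain d' where dd: "?d = Suc d'" using d1 by (cases ?d) auto
  define S where "S = (PiE {..<?d} (\<lambda>_. UNIV :: 'a set))"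
  define \<Psi> where "\<Psi> u = (\<Sum>j<?d. e (u j) * \<alpha> ^ j)" for u
  have pow: "\<exists>u\<in>S. \<Psi> u = \<alpha> ^ k" for k
  proof (induction k)
    case 0
    define u where "u = restrict (\<lambda>j. if j = 0 then 1 else (0::'a)) {..<?d}"
    have "u \<in> S" by (simp add: S_def u_def)
    moreover have "\<Psi> u = (\<Sum>j<?d. if j = 0 then 1 else 0)"
      unfolding \<Psi>_def by (rule sum.cong) (auto simp: u_def emb_0[OF e] emb_1[OF e])
    then have "\<Psi> u = 1" using d1 by (simp add: sum.delta)
    ultimately show ?case by auto
  next
    case (Suc k)
    then obtain u where u: "u \<in> S" "\<Psi> u = \<alpha> ^ k" by auto
    define u' where "u' = restrict (\<lambda>j. (if j = 0 then 0 else u (j - 1)) - u d' * coeff m j) {..<?d}"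
    have "u' \<in> S" by (simp add: S_def u'_def)
    moreover have "\<Psi> u' = \<alpha> * \<Psi> u"
      unfolding \<Psi>_def using shift_sum[OF e dd rel, of u] by (simp add: u'_def)
    ultimately show ?case using u by auto
  qed
  have "UNIV \<subseteq> \<Psi> ` S"
  proof
    fix y :: 'b
    show "y \<in> \<Psi> ` S"
    proof (cases "y = 0")
      case True
      define u where "u = restrict (\<lambda>j. (0::'a)) {..<?d}"
      have "u \<in> S" by (simp add: S_def u_def)
      moreover have "\<Psi> u = 0" by (simp add: \<Psi>_def u_def emb_0[OF e])
      ultimately show ?thesis using True by auto
    next
      case False
      then obtain k where "y = \<alpha> ^ k" using pr unfolding primitive_element_def by auto
      then show ?thesis using pow[of k] by (metis image_eqI)
    qed
  qed
  then have "card (UNIV :: 'b set) \<le> card (\<Psi> ` S)" by (simp add: card_mono)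
  also have "\<dots> \<le> card S" by (rule card_image_le) (simp add: S_def finite_PiE)
  also have "card S = p ^ ?d" by (simp add: S_def card_PiE ca)
  finally have "p ^ n \<le> p ^ ?d" using cb by simp
  then have lo: "n \<le> ?d" using p1 by (simp add: power_increasing_iff)
  define S' where "S' = (PiE {..<Suc n} (\<lambda>_. UNIV :: 'a set))"
  define \<Psi>' where "\<Psi>' u = (\<Sum>j<Suc n. e (u j) * \<alpha> ^ j)" for u
  have "\<not> inj_on \<Psi>' S'"
  proof
    assume "inj_on \<Psi>' S'"
    then have "card S' \<le> card (UNIV :: 'b set)"
      by (metis card_inj_on_le finite_UNIV subset_UNIV)
    moreover have "card S' = p ^ Suc n" by (simp add: S'_def card_PiE ca)
    ultimately show False using cb p1 by simp
  qed
  then obtain u v where uv: "u \<in> S'" "v \<in> S'" "u \<noteq> v" "\<Psi>' u = \<Psi>' v"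
    unfolding inj_on_def by blast
  obtain j where j: "j < Suc n" "u j \<noteq> v j"
    using uv(1-3) unfolding S'_def by (metis PiE_ext lessThan_iff)
  define w where "w i = u i - v i" for i
  obtain q where q: "\<forall>j. coeff q j = (if j < Suc n then w j else 0)" "degree q < Suc n"
     "poly (map_poly e q) \<alpha> = (\<Sum>j<Suc n. e (w j) * \<alpha> ^ j)"
    using mkpoly[OF e, of "Suc n" w \<alpha>] by auto
  have "poly (map_poly e q) \<alpha> = 0"
    using uv(4) unfolding q(3) \<Psi>'_def w_def
    by (simp add: emb_diff[OF e] left_diff_distrib sum_subtractf)
  moreover have "q \<noteq> 0" using q(1) j by (metis coeff_0 w_def right_minus_eq)
  ultimately have "?d \<le> degree q" using mp unfolding is_min_poly_def by auto
  with q(2) lo show ?thesis by simp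
qed


lemma final_part:
  fixes e :: "'a::field \<Rightarrow> 'b::field" and A D :: "nat \<Rightarrow> nat \<Rightarrow> 'a"
  assumes e: "field_embedding e" and pr: "primitive_element \<alpha>" and n: "n \<ge> 2"
    and inj: "\<And>u. (\<Sum>j<n. e (u j) * \<alpha> ^ j) = 0 \<Longrightarrow> \<forall>j<n. u j = 0"
    and comp: "\<And>i j. i < n \<Longrightarrow> j < n \<Longrightarrow> A i j = (if i + 1 < n then (if j = i + 1 then 1 else 0) else - mc j)"
    and rel: "\<alpha> ^ n = - (\<Sum>j<n. e (mc j) * \<alpha> ^ j)"
    and eq2: "\<And>i l. i < n \<Longrightarrow> l < n \<Longrightarrow> (\<Sum>t<n. D i t * A t l) = a * (\<Sum>q<n. A i q * D q l)"
    and eqb: "\<And>l. l < n \<Longrightarrow> bb l = (\<Sum>q<n. bb q * D q l)"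
    and bnz: "\<exists>l<n. bb l \<noteq> 0" and a0: "a \<noteq> 0"
  shows "a = 1 \<and> (\<forall>i<n. \<forall>j<n. D i j = (if i = j then 1 else 0))"
proof -
  define \<phi> where "\<phi> u = (\<Sum>j<n. e (u j) * \<alpha> ^ j)" for u :: "nat \<Rightarrow> 'a"
  define mA where "mA u = (\<lambda>l. \<Sum>t<n. u t * A t l)" for u :: "nat \<Rightarrow> 'a"
  define mD where "mD u = (\<lambda>l. \<Sum>t<n. u t * D t l)" for u :: "nat \<Rightarrow> 'a"
  define \<psi> where "\<psi> u = \<phi> (mD u)" for u
  obtain n' where n': "n = Suc n'" using n by (cases n) auto
  have mA_eq: "mA u l = (if l = 0 then 0 else u (l - 1)) - u n' * mc l" if l: "l < n" for u l
  proof -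
    have "mA u l = (\<Sum>t<n'. u t * A t l) + u n' * A n' l" by (simp add: mA_def n')
    also have "A n' l = - mc l" using comp[of n' l] l n' by simp
    also have "(\<Sum>t<n'. u t * A t l) = (\<Sum>t<n'. if t = l - 1 \<and> l \<noteq> 0 then u t else 0)"
      by (rule sum.cong) (use comp l n' in auto)
    also have "\<dots> = (if l = 0 then 0 else u (l - 1))"
      using l n' by (cases l) (auto simp: sum.delta)
    finally show ?thesis by simp
  qed
  have \<phi>A: "\<phi> (mA u) = \<alpha> * \<phi> u" for u
  proof -
    have "\<phi> (mA u) = (\<Sum>j<n. e ((if j = 0 then 0 else u (j - 1)) - u n' * mc j) * \<alpha> ^ j)"
      unfolding \<phi>_def by (rule sum.cong) (auto simp: mA_eq)
    also have "\<dots> = \<alpha> * \<phi> u" unfolding \<phi>_def by (rule shift_sum[OF e n' rel])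
    finally show ?thesis .
  qed
  have \<phi>_add: "\<phi> (\<lambda>j. u j + v j) = \<phi> u + \<phi> v" for u v
    by (simp add: \<phi>_def emb_add[OF e] distrib_right sum.distrib)
  have \<phi>_smult: "\<phi> (\<lambda>j. c * u j) = e c * \<phi> u" for c u
    by (simp add: \<phi>_def emb_mult[OF e] sum_distrib_left mult.assoc)
  have \<phi>_cong: "\<phi> u = \<phi> v" if "\<forall>j<n. u j = v j" for u v
    unfolding \<phi>_def using that by (intro sum.cong) auto
  have \<phi>_inj: "\<forall>j<n. u j = v j" if "\<phi> u = \<phi> v" for u v
  proof -
    have "(\<Sum>j<n. e (u j - v j) * \<alpha> ^ j) = 0"
      using that by (simp add: \<phi>_def emb_diff[OF e] left_diff_distrib sum_subtractf)
    then show ?thesis using inj[of "\<lambda>j. u j - v j"] by auto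
  qed
  have \<psi>_cong: "\<psi> u = \<psi> v" if "\<phi> u = \<phi> v" for u v
  proof -
    have "mD u = mD v" unfolding mD_def using \<phi>_inj[OF that] by (intro ext sum.cong) auto
    then show ?thesis by (simp add: \<psi>_def)
  qed
  have \<psi>_add: "\<psi> (\<lambda>j. u j + v j) = \<psi> u + \<psi> v" for u v
  proof -
    have "mD (\<lambda>j. u j + v j) = (\<lambda>l. mD u l + mD v l)"
      by (simp add: mD_def distrib_right sum.distrib)
    then show ?thesis by (simp add: \<psi>_def \<phi>_add)
  qed
  have AD: "mA (mD u) l = a * mD (mA u) l" if l: "l < n" for u l
  proof -
    have "mA (mD u) l = (\<Sum>t<n. \<Sum>i<n. u i * D i t * A t l)"
      by (simp add: mA_def mD_def sum_distrib_right)
    also have "\<dots> = (\<Sum>i<n. u i * (\<Sum>t<n. D i t * A t l))"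
      by (subst sum.swap) (simp add: sum_distrib_left mult.assoc)
    also have "\<dots> = (\<Sum>i<n. u i * (a * (\<Sum>q<n. A i q * D q l)))"
      by (rule sum.cong) (simp_all add: eq2 l)
    also have "\<dots> = a * (\<Sum>q<n. \<Sum>i<n. u i * A i q * D q l)"
      by (subst sum.swap) (simp add: sum_distrib_left sum_distrib_right mult.assoc mult.left_commute)
    also have "\<dots> = a * mD (mA u) l"
      by (simp add: mA_def mD_def sum_distrib_right)
    finally show ?thesis .
  qed
  have \<psi>A: "e a * \<psi> (mA u) = \<alpha> * \<psi> u" for u
  proof -
    have "\<alpha> * \<psi> u = \<phi> (mA (mD u))" by (simp add: \<psi>_def \<phi>A)
    also have "\<dots> = \<phi> (\<lambda>l. a * mD (mA u) l)" by (rule \<phi>_cong) (simp add: AD)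
    also have "\<dots> = e a * \<psi> (mA u)" by (simp add: \<phi>_smult \<psi>_def)
    finally show ?thesis by simp
  qed
  define \<epsilon> where "\<epsilon> k = (\<lambda>j::nat. if j = k then 1 else 0 :: 'a)" for k :: nat
  have \<phi>\<epsilon>: "\<phi> (\<epsilon> k) = \<alpha> ^ k" if "k < n" for k
  proof -
    have "\<phi> (\<epsilon> k) = (\<Sum>j<n. if j = k then \<alpha> ^ j else 0)"
      unfolding \<phi>_def by (rule sum.cong) (auto simp: \<epsilon>_def emb_0[OF e] emb_1[OF e])
    then show ?thesis using that by (simp add: sum.delta)
  qed
  define uk where "uk k = (mA ^^ k) (\<epsilon> 0)" for k
  have \<phi>uk: "\<phi> (uk k) = \<alpha> ^ k" for k
    by (induction k) (use n in \<open>auto simp: uk_def \<phi>\<epsilon> \<phi>A\<close>)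
  define y0 where "y0 = \<psi> (\<epsilon> 0)"
  have \<psi>k: "e a ^ k * \<psi> (uk k) = \<alpha> ^ k * y0" for k
  proof (induction k)
    case 0 then show ?case by (simp add: uk_def y0_def)
  next
    case (Suc k)
    have "e a ^ Suc k * \<psi> (uk (Suc k)) = e a ^ k * (e a * \<psi> (mA (uk k)))"
      by (simp add: uk_def mult.assoc mult.left_commute)
    also have "\<dots> = \<alpha> * (e a ^ k * \<psi> (uk k))" by (simp add: \<psi>A mult.left_commute)
    finally show ?case using Suc by simp
  qed
  have \<psi>0: "\<psi> u = 0" if "\<forall>j<n. u j = 0" for u
  proof -
    have "mD u = (\<lambda>l. 0)" unfolding mD_def using that by (intro ext sum.neutral) auto
    then show ?thesis by (simp add: \<psi>_def \<phi>_def emb_0[OF e])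
  qed
  have cover: "(\<forall>j<n. u j = 0) \<or> (\<exists>k. \<phi> u = \<phi> (uk k))" for u
  proof (cases "\<phi> u = 0")
    case True then show ?thesis using inj[of u] by (simp add: \<phi>_def)
  next
    case False
    then obtain k where "\<phi> u = \<alpha> ^ k" using pr unfolding primitive_element_def by auto
    then show ?thesis using \<phi>uk by auto
  qed
  have bD: "\<phi> bb = \<psi> bb" unfolding \<psi>_def by (rule \<phi>_cong) (simp add: mD_def eqb)
  have \<phi>b: "\<phi> bb \<noteq> 0" using bnz inj[of bb] by (auto simp: \<phi>_def)
  have ea: "e a \<noteq> 0" using a0 by (simp add: emb_eq0[OF e])
  have y0nz: "y0 \<noteq> 0"
  proof
    assume y: "y0 = 0"
    have "\<psi> u = 0" for u
    proof -
      from cover[of u] show ?thesis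
      proof
        assume "\<forall>j<n. u j = 0" then show ?thesis by (rule \<psi>0)
      next
        assume "\<exists>k. \<phi> u = \<phi> (uk k)"
        then obtain k where k: "\<phi> u = \<phi> (uk k)" by auto
        have "e a ^ k * \<psi> (uk k) = 0" using \<psi>k[of k] y by simp
        then have "\<psi> (uk k) = 0" using ea by simp
        then show ?thesis using \<psi>_cong[OF k] by simp
      qed
    qed
    then show False using bD \<phi>b by simp
  qed
  have n0: "0 < n" "1 < n" using n by auto
  have "\<phi> (\<lambda>j. \<epsilon> 0 j + \<epsilon> 1 j) = 1 + \<alpha>" using \<phi>_add \<phi>\<epsilon> n0 by simp
  moreover have "\<phi> (\<lambda>j. \<epsilon> 0 j + \<epsilon> 1 j) \<noteq> 0"
  proof
    assume "\<phi> (\<lambda>j. \<epsilon> 0 j + \<epsilon> 1 j) = 0"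
    then have "\<forall>j<n. \<epsilon> 0 j + \<epsilon> 1 j = 0" using inj[of "\<lambda>j. \<epsilon> 0 j + \<epsilon> 1 j"] unfolding \<phi>_def by blast
    then have "\<epsilon> 0 0 + \<epsilon> 1 0 = 0" using n0 by blast
    then show False by (simp add: \<epsilon>_def)
  qed
  ultimately have "1 + \<alpha> \<noteq> 0" by simp
  then obtain k where k: "1 + \<alpha> = \<alpha> ^ k" using pr unfolding primitive_element_def by blast
  have anz: "\<alpha> \<noteq> 0"
  proof
    assume "\<alpha> = 0"
    then have "(\<Sum>j<n. e (\<epsilon> 1 j) * \<alpha> ^ j) = 0" using \<phi>\<epsilon>[of 1] n0 by (simp add: \<phi>_def)
    then have "\<forall>j<n. \<epsilon> 1 j = 0" by (rule inj)
    then have "\<epsilon> 1 1 = 0" using n0 by blast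
    then show False by (simp add: \<epsilon>_def)
  qed
  have "k \<noteq> 0"
  proof
    assume "k = 0" then have "1 + \<alpha> = 1" using k by simp
    then show False using anz by simp
  qed
  then obtain k' where k': "k = Suc k'" by (cases k) auto
  have "\<phi> (uk k) = \<phi> (\<lambda>j. \<epsilon> 0 j + \<epsilon> 1 j)" using \<phi>uk k \<phi>_add \<phi>\<epsilon> n0 by simp
  then have "\<psi> (uk k) = \<psi> (\<epsilon> 0) + \<psi> (\<epsilon> 1)" using \<psi>_cong \<psi>_add by metis
  moreover have "\<psi> (\<epsilon> 1) = \<psi> (uk 1)" by (rule \<psi>_cong) (use \<phi>\<epsilon>[of 1] n0 \<phi>uk[of 1] in simp)
  ultimately have uk_k: "\<psi> (uk k) = y0 + \<psi> (uk 1)" by (simp add: y0_def)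
  have ea1: "e a * \<psi> (uk 1) = \<alpha> * y0" using \<psi>k[of 1] by simp
  have "e a ^ k * (y0 + \<psi> (uk 1)) = (1 + \<alpha>) * y0" using \<psi>k[of k] k uk_k by simp
  then have "e a ^ k * y0 + e a ^ k' * \<alpha> * y0 = y0 + \<alpha> * y0"
  proof -
    have "e a ^ k * \<psi> (uk 1) = e a ^ k' * (e a * \<psi> (uk 1))" unfolding k' by simp
    also have "\<dots> = e a ^ k' * \<alpha> * y0" using ea1 by simp
    finally show ?thesis using \<open>e a ^ k * (y0 + \<psi> (uk 1)) = (1 + \<alpha>) * y0\<close>
      by (simp add: distrib_left distrib_right)
  qed
  then have "(e a ^ k - 1 + (e a ^ k' - 1) * \<alpha>) * y0 = 0"
    unfolding k' by (simp add: algebra_simps)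
  then have z: "e (a ^ k - 1) + e (a ^ k' - 1) * \<alpha> = 0"
    using y0nz by (simp add: emb_diff[OF e] emb_power[OF e] emb_1[OF e])
  define w where "w = (\<lambda>j. (a ^ k - 1) * \<epsilon> 0 j + (a ^ k' - 1) * \<epsilon> 1 j)"
  have "\<phi> w = 0" using z \<phi>\<epsilon>[of 1] n0 unfolding w_def by (simp add: \<phi>_add \<phi>_smult \<phi>\<epsilon>)
  then have "\<forall>j<n. w j = 0" using inj by (simp add: \<phi>_def)
  then have "w 0 = 0" "w 1 = 0" using n0 by auto
  then have ak: "a ^ k = 1" "a ^ k' = 1" by (auto simp: w_def \<epsilon>_def)
  have a1: "a = 1" using ak unfolding k' by simp
  have all: "\<psi> u = \<phi> u * y0" for u
  proof -
    from cover[of u] show ?thesis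
    proof
      assume "\<forall>j<n. u j = 0" then show ?thesis using \<psi>0 by (simp add: \<phi>_def emb_0[OF e])
    next
      assume "\<exists>k. \<phi> u = \<phi> (uk k)"
      then obtain k where k: "\<phi> u = \<phi> (uk k)" by auto
      have "\<psi> (uk k) = \<alpha> ^ k * y0" using \<psi>k[of k] a1 by (simp add: emb_1[OF e])
      then show ?thesis using \<psi>_cong[OF k] k \<phi>uk by simp
    qed
  qed
  have y1: "y0 = 1" using all[of bb] bD \<phi>b by simp
  have "D i j = (if i = j then 1 else 0)" if ij: "i < n" "j < n" for i j
  proof -
    have "\<phi> (mD (\<epsilon> i)) = \<phi> (\<epsilon> i)" using all[of "\<epsilon> i"] y1 by (simp add: \<psi>_def)
    then have "mD (\<epsilon> i) j = \<epsilon> i j" using \<phi>_inj ij by blast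
    moreover have "mD (\<epsilon> i) j = (\<Sum>t<n. if t = i then D t j else 0)"
      unfolding mD_def \<epsilon>_def by (rule sum.cong) auto
    then have "mD (\<epsilon> i) j = D i j" using ij(1) by (simp add: sum.delta)
    ultimately show ?thesis by (auto simp: \<epsilon>_def split: if_splits)
  qed
  with a1 show ?thesis by blast
qed


lemma wedge_zero:
  fixes r x :: "nat \<Rightarrow> 'a::field"
  assumes k0: "k0 < n" "r k0 \<noteq> 0"
    and w: "\<And>k l. k < l \<Longrightarrow> l < n \<Longrightarrow> r k * x l - r l * x k = 0"
  shows "\<forall>l<n. x l = (x k0 / r k0) * r l"
proof (intro allI impI)
  fix l assume l: "l < n"
  consider "l = k0" | "l < k0" | "k0 < l" by linarith
  then show "x l = (x k0 / r k0) * r l"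
  proof cases
    case 1 then show ?thesis using k0 by simp
  next
    case 2
    then have "r l * x k0 - r k0 * x l = 0" using w k0 by blast
    then show ?thesis using k0 by (simp add: field_simps)
  next
    case 3
    then have "r k0 * x l - r l * x k0 = 0" using w l by blast
    then show ?thesis using k0 by (simp add: field_simps)
  qed
qed

lemma part1:
  fixes A D :: "nat \<Rightarrow> nat \<Rightarrow> 'a::field" and r s :: "nat \<Rightarrow> 'a"
  assumes n: "n \<ge> 1"
    and comp: "\<And>i j. i < n \<Longrightarrow> j < n \<Longrightarrow> A i j = (if i + 1 < n then (if j = i + 1 then 1 else 0) else - mc j)"
    and mc0: "mc 0 \<noteq> 0"
    and E1: "\<And>i k l. i < n \<Longrightarrow> k < l \<Longrightarrow> l < n \<Longrightarrow>
               s i * cc k l = (\<Sum>q<n. A i q * (r k * D q l - r l * D q k))"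
    and rnz: "k0 < n" "r k0 \<noteq> 0"
  shows "\<exists>z. \<forall>i<n. \<exists>la mu. \<forall>l<n. D i l = la * r l + mu * z l"
proof -
  define R where "R i l = (\<Sum>q<n. A i q * D q l)" for i l
  have E1': "s i * cc k l = r k * R i l - r l * R i k" if "i < n" "k < l" "l < n" for i k l
    unfolding E1[OF that] R_def by (simp add: sum_distrib_left right_diff_distrib sum_subtractf algebra_simps)
  have spanR: "\<exists>z. \<forall>i<n. \<exists>la mu. \<forall>l<n. R i l = la * r l + mu * z l"
  proof (cases "\<exists>i0<n. s i0 \<noteq> 0")
    case True
    then obtain i0 where i0: "i0 < n" "s i0 \<noteq> 0" by auto
    have "\<exists>la mu. \<forall>l<n. R i l = la * r l + mu * R i0 l" if i: "i < n" for i
    proof -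
      define x where "x l = s i0 * R i l - s i * R i0 l" for l
      have "r k * x l - r l * x k = 0" if "k < l" "l < n" for k l
      proof -
        have "r k * x l - r l * x k = s i0 * (r k * R i l - r l * R i k) - s i * (r k * R i0 l - r l * R i0 k)"
          by (simp add: x_def algebra_simps)
        also have "\<dots> = s i0 * (s i * cc k l) - s i * (s i0 * cc k l)"
          using E1'[OF i that] E1'[OF i0(1) that] by simp
        also have "\<dots> = 0" by simp
        finally show ?thesis .
      qed
      then have xl: "\<forall>l<n. x l = (x k0 / r k0) * r l" using wedge_zero[of k0 n r, OF rnz] by blast
      show ?thesis
      proof (intro exI allI impI)
        fix l assume "l < n"
        then have "s i0 * R i l - s i * R i0 l = (x k0 / r k0) * r l" using xl by (simp add: x_def)
        then show "R i l = (x k0 / r k0 / s i0) * r l + (s i / s i0) * R i0 l"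
          using i0 by (simp add: field_simps)
      qed
    qed
    then show ?thesis by blast
  next
    case False
    have "\<exists>la mu. \<forall>l<n. R i l = la * r l + mu * 0" if i: "i < n" for i
    proof -
      have "r k * R i l - r l * R i k = 0" if "k < l" "l < n" for k l
        using E1'[OF i that] False i by auto
      then have "\<forall>l<n. R i l = (R i k0 / r k0) * r l" using wedge_zero[of k0 n r, OF rnz] by blast
      then show ?thesis by (intro exI[of _ "R i k0 / r k0"] exI[of _ 0]) simp
    qed
    then show ?thesis by (intro exI[of _ "\<lambda>_. 0"]) auto
  qed
  then obtain z where z: "\<forall>i<n. \<exists>la mu. \<forall>l<n. R i l = la * r l + mu * z l" by blast
  then obtain lf mf where lm: "\<And>i l. i < n \<Longrightarrow> l < n \<Longrightarrow> R i l = lf i * r l + mf i * z l"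
    by metis
  obtain n' where n': "n = Suc n'" using n by (cases n) auto
  have RD: "R i l = D (Suc i) l" if "i < n'" for i l
  proof -
    have "R i l = (\<Sum>q<n. if q = Suc i then D q l else 0)"
      unfolding R_def by (rule sum.cong) (use comp that n' in auto)
    then show ?thesis using that n' by (simp add: sum.delta)
  qed
  have Rlast: "R n' l = - (mc 0 * D 0 l + (\<Sum>q<n'. mc (Suc q) * D (Suc q) l))" for l
  proof -
    have "R n' l = (\<Sum>q<n. - (mc q * D q l))"
      unfolding R_def by (rule sum.cong) (use comp n' in auto)
    also have "\<dots> = - (\<Sum>q<n. mc q * D q l)" by (simp add: sum_negf)
    also have "(\<Sum>q<n. mc q * D q l) = mc 0 * D 0 l + (\<Sum>q<n'. mc (Suc q) * D (Suc q) l)"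
      unfolding n' by (rule sum.lessThan_Suc_shift)
    finally show ?thesis .
  qed
  have "\<exists>la mu. \<forall>l<n. D i l = la * r l + mu * z l" if i: "i < n" for i
  proof (cases i)
    case (Suc i')
    then have "i' < n'" using i n' by simp
    then show ?thesis using lm[of i'] RD[of i'] n' Suc by (intro exI) auto
  next
    case 0
    define L where "L = - (lf n' + (\<Sum>q<n'. mc (Suc q) * lf q)) / mc 0"
    define M where "M = - (mf n' + (\<Sum>q<n'. mc (Suc q) * mf q)) / mc 0"
    have "D 0 l = L * r l + M * z l" if l: "l < n" for l
    proof -
      have "mc 0 * D 0 l = - R n' l - (\<Sum>q<n'. mc (Suc q) * D (Suc q) l)"
        using Rlast[of l] by simp
      also have "(\<Sum>q<n'. mc (Suc q) * D (Suc q) l) = (\<Sum>q<n'. mc (Suc q) * (lf q * r l + mf q * z l))"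
      proof (rule sum.cong)
        fix q assume "q \<in> {..<n'}"
        then have "q < n'" by simp
        then have "D (Suc q) l = lf q * r l + mf q * z l" using RD[of q l] lm[of q l] n' l by simp
        then show "mc (Suc q) * D (Suc q) l = mc (Suc q) * (lf q * r l + mf q * z l)" by simp
      qed simp
      also have "R n' l = lf n' * r l + mf n' * z l" using lm n' l by simp
      finally have "mc 0 * D 0 l = - (lf n' + (\<Sum>q<n'. mc (Suc q) * lf q)) * r l
                     + - (mf n' + (\<Sum>q<n'. mc (Suc q) * mf q)) * z l"
        by (simp add: algebra_simps sum.distrib sum_distrib_right sum_distrib_left)
      then have "D 0 l = (- (lf n' + (\<Sum>q<n'. mc (Suc q) * lf q)) * r l
                     + - (mf n' + (\<Sum>q<n'. mc (Suc q) * mf q)) * z l) / mc 0"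
        using mc0 by (metis nonzero_mult_div_cancel_left)
      also have "\<dots> = L * r l + M * z l" unfolding L_def M_def using mc0 by (simp add: field_simps)
      finally show ?thesis .
    qed
    then show ?thesis using 0 by blast
  qed
  then show ?thesis by blast
qed

lemma det_zero_row:
  fixes A :: "'a::comm_ring_1 mat"
  assumes A: "A \<in> carrier_mat N N" and i: "i < N" and z: "\<forall>j<N. A $$ (i,j) = 0"
  shows "det A = 0"
proof -
  have "A = mat\<^sub>r N N (\<lambda>k. if k = i then 0\<^sub>v N else row A k)"
    by (rule eq_matI) (use A z in auto)
  moreover have "det (mat\<^sub>r N N (\<lambda>k. if k = i then 0\<^sub>v N else row A k)) = 0"
    by (rule det_row_0[OF i]) (use A in auto)
  ultimately show ?thesis by simp
qed

lemma inv_det: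
  fixes g :: "'a::field mat"
  assumes g: "g \<in> carrier_mat N N" and inv: "invertible_mat g"
  shows "det g \<noteq> 0"
proof -
  obtain B where B: "g * B = 1\<^sub>m N" "B * g = 1\<^sub>m (dim_row B)"
    using inv g unfolding invertible_mat_def inverts_mat_def by auto
  have "dim_col B = N" using arg_cong[OF B(1), of dim_col] by simp
  moreover have "dim_row B = N" using arg_cong[OF B(2), of dim_col] g by simp
  ultimately have Bc: "B \<in> carrier_mat N N" by auto
  have "det g * det B = 1" using det_mult[OF g Bc] B(1) by simp
  then show ?thesis by auto
qed

lemma rank3_contra:
  fixes g :: "'a::field mat"
  assumes g: "g \<in> carrier_mat N N" and inv: "invertible_mat g" and N: "N \<ge> 4"
    and rep: "\<And>i j. i < N \<Longrightarrow> j < N \<Longrightarrow> g $$ (i,j) = C i 0 * y0 j + C i 1 * y1 j + C i 2 * y2 j"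
  shows False
proof -
  define Y where "Y = mat N N (\<lambda>(i,j). if i = 0 then y0 j else if i = 1 then y1 j else if i = 2 then y2 j else 0)"
  define Cm where "Cm = mat N N (\<lambda>(i,k). if k = 0 then C i 0 else if k = 1 then C i 1 else if k = 2 then C i 2 else 0)"
  have Yc: "Y \<in> carrier_mat N N" and Cc: "Cm \<in> carrier_mat N N" by (auto simp: Y_def Cm_def)
  have "g = Cm * Y"
  proof (rule eq_matI)
    fix i j assume i: "i < dim_row (Cm * Y)" and j: "j < dim_col (Cm * Y)"
    then have i': "i < N" and j': "j < N" by (auto simp: Cm_def Y_def)
    have "(Cm * Y) $$ (i,j) = (\<Sum>k\<in>{0..<N}. Cm $$ (i,k) * Y $$ (k,j))"
      using i' j' by (simp add: scalar_prod_def Cm_def Y_def)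
    also have "\<dots> = (\<Sum>k\<in>{0..<3}. Cm $$ (i,k) * Y $$ (k,j))"
      by (rule sum.mono_neutral_right) (use N i' j' in \<open>auto simp: Y_def\<close>)
    also have "\<dots> = C i 0 * y0 j + C i 1 * y1 j + C i 2 * y2 j"
      using N i' j' by (simp add: Cm_def Y_def numeral_3_eq_3 add.assoc)
    finally show "g $$ (i,j) = (Cm * Y) $$ (i,j)" using rep[OF i' j'] by simp
  qed (use g in \<open>auto simp: Cm_def Y_def\<close>)
  moreover have "det Y = 0"
    by (rule det_zero_row[OF Yc, of 3]) (use N in \<open>auto simp: Y_def\<close>)
  ultimately have "det g = 0" using det_mult[OF Cc Yc] by simp
  with inv_det[OF g inv] show False by simp
qed

lemma wpairs_finite: "finite (wpairs n)"
  by (rule finite_subset[of _ "{0..n} \<times> {0..n}"]) (auto simp: wpairs_def)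

lemma wpairs_sum:
  assumes "\<And>p q. (p,q) \<in> wpairs n \<Longrightarrow> p \<noteq> 0 \<Longrightarrow> F p q = 0"
  shows "(\<Sum>(p,q)\<in>wpairs n. F p q) = (\<Sum>q\<in>{1..n}. F 0 q)"
proof -
  have sub: "(\<lambda>q. (0,q)) ` {1..n} \<subseteq> wpairs n" by (auto simp: wpairs_def)
  have "(\<Sum>(p,q)\<in>wpairs n. F p q) = (\<Sum>(p,q)\<in>(\<lambda>q. (0::nat,q)) ` {1..n}. F p q)"
  proof (rule sum.mono_neutral_right[OF wpairs_finite sub])
    show "\<forall>x\<in>wpairs n - (\<lambda>q. (0,q)) ` {1..n}. (case x of (p,q) \<Rightarrow> F p q) = 0"
    proof
      fix x assume x: "x \<in> wpairs n - (\<lambda>q. (0,q)) ` {1..n}"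
      obtain p q where pq: "x = (p,q)" by (cases x)
      have "p \<noteq> 0"
      proof
        assume "p = 0"
        then have "x \<in> (\<lambda>q. (0,q)) ` {1..n}" using x pq by (auto simp: wpairs_def)
        with x show False by blast
      qed
      then show "(case x of (p,q) \<Rightarrow> F p q) = 0" using assms x pq by auto
    qed
  qed
  also have "\<dots> = (\<Sum>q\<in>{1..n}. F 0 q)" by (subst sum.reindex) (auto simp: inj_on_def)
  finally show ?thesis .
qed

lemma sum_1n: "(\<Sum>t\<in>{1..n}. f t) = (\<Sum>t<n. f (Suc t))"
  by (metis One_nat_def sum.atLeast1_atMost_eq)

theorem mainTheorem1:
  fixes p n :: nat
    and b :: "nat \<Rightarrow> 'a::{finite,field}"
    and c :: "nat \<Rightarrow> nat \<Rightarrow> 'a"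
    and e :: "'a \<Rightarrow> 'b::{finite,field}"
    and \<alpha> :: 'b
    and m :: "'a poly"
  assumes "prime p" and "card (UNIV :: 'a set) = p" and "n \<ge> 3"
    and "card (UNIV :: 'b set) = p ^ n" and "field_embedding e"
    and "primitive_element \<alpha>" and "is_min_poly e \<alpha> m"
    and "\<exists>i\<in>{1..n}. b i \<noteq> 0"
    and "\<exists>j k. 1 \<le> j \<and> j < k \<and> k \<le> n \<and> c j k \<noteq> 0"
  shows "{g \<in> carrier_mat (n+1) (n+1). invertible_mat g \<and>
            (\<forall>v \<in> carrier_vec (n+1). \<forall>kl \<in> wpairs n.
               fmap n b c (companion_mat m) (rmult v g) kl
                 = hat n g (fmap n b c (companion_mat m) v) kl)}
         = {1\<^sub>m (n+1)}" (is "?S = _")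
proof -
  note e = assms(5)
  let ?N = "n + 1"
  let ?A = "companion_mat m"
  have dm: "degree m = n" by (rule degree_min_poly[OF assms(1,2,4,5,6,7)])
  have Aidx: "?A $$ (i,j) = (if i + 1 < n then (if j = i + 1 then 1 else 0) else - coeff m j)"
    if "i < n" "j < n" for i j
    unfolding companion_mat_def Let_def dm using that by simp
  show ?thesis
  proof (intro equalityI subsetI)
    fix g assume "g \<in> ?S"
    then have gc: "g \<in> carrier_mat ?N ?N" and inv: "invertible_mat g"
      and eq: "\<And>v kl. v \<in> carrier_vec ?N \<Longrightarrow> kl \<in> wpairs n \<Longrightarrow>
          fmap n b c ?A (rmult v g) kl = hat n g (fmap n b c ?A v) kl" by auto
    define G where "G i j = g $$ (i,j)" for i j
    have fmap_row: "fmap n b c ?A (row g i) (k,l) = (if k = 0 then G i 0 * b l + (\<Sum>t\<in>{1..n}. G i t * ?A $$ (t-1,l-1)) else G i 0 * c k l)"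
      if "i \<le> n" for i k l
    proof -
      have "(\<Sum>t\<in>{1..n}. row g i $ t * ?A $$ (t-1,l-1)) = (\<Sum>t\<in>{1..n}. G i t * ?A $$ (t-1,l-1))"
        by (rule sum.cong) (use gc that in \<open>auto simp: G_def\<close>)
      then show ?thesis using gc that by (simp add: fmap_def G_def)
    qed
    have fmap_unit: "fmap n b c ?A (unit_vec ?N i) (p,q) =
        (if p = 0 then (if i = 0 then b q else ?A $$ (i-1,q-1)) else (if i = 0 then c p q else 0))"
      if "i \<le> n" for i p q
    proof -
      have "(\<Sum>t\<in>{1..n}. unit_vec ?N i $ t * ?A $$ (t-1,q-1)) = (\<Sum>t\<in>{1..n}. if t = i then ?A $$ (i-1,q-1) else 0)"
        by (rule sum.cong) (use that in auto)
      also have "\<dots> = (if i \<in> {1..n} then ?A $$ (i-1,q-1) else 0)" by (simp add: sum.delta)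
      finally show ?thesis using that by (auto simp: fmap_def)
    qed
    have fmap_unit': "fmap n b c ?A (unit_vec (Suc n) i) (p,q) =
        (if p = 0 then (if i = 0 then b q else ?A $$ (i-1,q-1)) else (if i = 0 then c p q else 0))"
      if "i \<le> n" for i p q using fmap_unit[OF that] by simp
    have beq: "fmap n b c ?A (row g i) (k,l) =
       (\<Sum>(p,q)\<in>wpairs n. fmap n b c ?A (unit_vec ?N i) (p,q) * (G p k * G q l - G p l * G q k))"
      if i: "i \<le> n" and kl: "(k,l) \<in> wpairs n" for i k l
    proof -
      have "rmult (unit_vec ?N i) g = row g i"
      proof (rule eq_vecI)
        fix j assume "j < dim_vec (row g i)"
        then have j: "j < ?N" using gc by simp
        have "(\<Sum>t<?N. unit_vec ?N i $ t * g $$ (t, j)) = (\<Sum>t<?N. if t = i then g $$ (i,j) else 0)"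
          by (rule sum.cong) (use i in auto)
        also have "\<dots> = g $$ (i,j)" using i by (simp add: sum.delta)
        finally show "rmult (unit_vec ?N i) g $ j = row g i $ j"
          using gc j i by (simp add: rmult_def)
      qed (use gc in \<open>simp add: rmult_def\<close>)
      then have "fmap n b c ?A (row g i) (k,l) = hat n g (fmap n b c ?A (unit_vec ?N i)) (k,l)"
        using eq[of "unit_vec ?N i" "(k,l)"] kl by simp
      also have "\<dots> = (\<Sum>(p,q)\<in>wpairs n. fmap n b c ?A (unit_vec ?N i) (p,q) * (G p k * G q l - G p l * G q k))"
        unfolding hat_def
      proof (rule sum.cong)
        fix x assume x: "x \<in> wpairs n"
        obtain p q where pq: "x = (p,q)" by (cases x)
        have "p \<le> n" "q \<le> n" "k \<le> n" "l \<le> n" using x kl pq by (auto simp: wpairs_def)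
        then show "(case x of (p,q) \<Rightarrow> fmap n b c ?A (unit_vec ?N i) (p,q) * wedge (row g p) (row g q) (k,l)) =
            (case x of (p,q) \<Rightarrow> fmap n b c ?A (unit_vec ?N i) (p,q) * (G p k * G q l - G p l * G q k))"
          using gc pq by (simp add: wedge_def G_def)
      qed simp
      finally show ?thesis .
    qed
    define a where "a = G 0 0"
    define r where "r j = G 0 (Suc j)" for j
    define s where "s i = G (Suc i) 0" for i
    define D where "D i j = G (Suc i) (Suc j)" for i j
    define bb where "bb j = b (Suc j)" for j
    define cc where "cc j k = c (Suc j) (Suc k)" for j k
    define Af where "Af i j = ?A $$ (i,j)" for i j
    have comp: "Af i j = (if i + 1 < n then (if j = i + 1 then 1 else 0) else - coeff m j)"
      if "i < n" "j < n" for i j using Aidx[OF that] by (simp add: Af_def)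
    have E1: "s i * cc k l = (\<Sum>q<n. Af i q * (r k * D q l - r l * D q k))"
      if i: "i < n" and kl: "k < l" "l < n" for i k l
    proof -
      have w: "(Suc k, Suc l) \<in> wpairs n" using kl by (auto simp: wpairs_def)
      have "s i * cc k l = fmap n b c ?A (row g (Suc i)) (Suc k, Suc l)"
        using fmap_row[of "Suc i" "Suc k" "Suc l"] i by (simp add: s_def cc_def)
      also have "\<dots> = (\<Sum>(p,q)\<in>wpairs n. fmap n b c ?A (unit_vec ?N (Suc i)) (p,q) * (G p (Suc k) * G q (Suc l) - G p (Suc l) * G q (Suc k)))"
        using beq[of "Suc i" "Suc k" "Suc l"] i w by simp
      also have "\<dots> = (\<Sum>q\<in>{1..n}. fmap n b c ?A (unit_vec ?N (Suc i)) (0,q) * (G 0 (Suc k) * G q (Suc l) - G 0 (Suc l) * G q (Suc k)))"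
        by (rule wpairs_sum) (use i fmap_unit in auto)
      also have "\<dots> = (\<Sum>q<n. Af i q * (r k * D q l - r l * D q k))"
        unfolding sum_1n using i by (simp add: fmap_unit' Af_def r_def D_def)
      finally show ?thesis .
    qed
    have n3: "n \<ge> 3" using assms(3) .
    have mc0: "coeff m 0 \<noteq> 0"
    proof
      assume c0: "coeff m 0 = 0"
      obtain q where q: "\<forall>j. coeff q j = (if j < n then coeff m (Suc j) else 0)" "degree q < n"
        "poly (map_poly e q) \<alpha> = (\<Sum>j<n. e (coeff m (Suc j)) * \<alpha> ^ j)"
        using mkpoly[OF e, of n "\<lambda>j. coeff m (Suc j)" \<alpha>] n3 by auto
      have "0 = poly (map_poly e m) \<alpha>" using assms(7) unfolding is_min_poly_def by simp
      also have "\<dots> = (\<Sum>i\<le>n. e (coeff m i) * \<alpha> ^ i)" by (rule poly_map_sum[OF e]) (simp add: dm)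
      also have "\<dots> = (\<Sum>i<Suc n. e (coeff m i) * \<alpha> ^ i)" by (simp add: lessThan_Suc_atMost)
      also have "\<dots> = \<alpha> * (\<Sum>j<n. e (coeff m (Suc j)) * \<alpha> ^ j)"
        unfolding sum.lessThan_Suc_shift using c0
        by (simp add: emb_0[OF e] sum_distrib_left mult.left_commute)
      finally have z: "\<alpha> * poly (map_poly e q) \<alpha> = 0" using q(3) by simp
      have "\<alpha> \<noteq> 0"
      proof
        assume "\<alpha> = 0"
        have h: "poly (map_poly e [:0, 1::'a:]) \<alpha> = 0"
          using poly_map_sum[OF e, of "[:0,1::'a:]" 1 \<alpha>] \<open>\<alpha> = 0\<close> by (simp add: emb_0[OF e])
        have "[:0, 1::'a:] \<noteq> 0" by simp
        then have "degree m \<le> degree [:0, 1::'a:]"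
          using assms(7) h unfolding is_min_poly_def by blast
        then show False using dm n3 by simp
      qed
      then have "poly (map_poly e q) \<alpha> = 0" using z by simp
      moreover have "q \<noteq> 0"
      proof
        assume "q = 0"
        then have "coeff m (Suc (n - 1)) = 0" using q(1) n3 by (metis coeff_0 diff_less zero_less_numeral le_trans numeral_le_iff less_le_trans order_refl zero_less_one less_numeral_extra(1) not_less)
        then show False using assms(7) dm n3 unfolding is_min_poly_def by simp
      qed
      ultimately have "degree m \<le> degree q" using assms(7) unfolding is_min_poly_def by auto
      then show False using q(2) dm by simp
    qed
    have rzero: "\<forall>k<n. r k = 0"
    proof (rule ccontr)
      assume "\<not> (\<forall>k<n. r k = 0)"
      then obtain k0 where k0: "k0 < n" "r k0 \<noteq> 0" by auto
      obtain z where z: "\<forall>i<n. \<exists>la mu. \<forall>l<n. D i l = la * r l + mu * z l"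
        using part1[of n Af "coeff m" s cc r D k0, OF _ comp mc0 E1 k0] n3 by auto
      then obtain lf mf where lm: "\<And>i l. i < n \<Longrightarrow> l < n \<Longrightarrow> D i l = lf i * r l + mf i * z l"
        by metis
      define C where "C i k = (if i = 0 then (if k = 0 then a else if k = 1 then 1 else 0)
                              else (if k = 0 then s (i-1) else if k = 1 then lf (i-1) else mf (i-1)))" for i k :: nat
      define y0 where "y0 j = (if j = 0 then 1 else (0::'a))" for j :: nat
      define y1 where "y1 j = (if j = 0 then 0 else r (j-1))" for j
      define y2 where "y2 j = (if j = 0 then 0 else z (j-1))" for j
      show False
      proof (rule rank3_contra[OF gc inv])
        fix i j assume ij: "i < ?N" "j < ?N"
        show "g $$ (i,j) = C i 0 * y0 j + C i 1 * y1 j + C i 2 * y2 j"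
        proof (cases i)
          case 0 then show ?thesis
            by (cases j) (auto simp: C_def y0_def y1_def y2_def a_def r_def G_def)
        next
          case (Suc i')
          then show ?thesis using ij lm[of i' "j - 1"]
            by (cases j) (auto simp: C_def y0_def y1_def y2_def s_def D_def G_def)
        qed
      qed (use n3 in simp)
    qed
    obtain j0 k0 where jk: "1 \<le> j0" "j0 < k0" "k0 \<le> n" "c j0 k0 \<noteq> 0" using assms(9) by auto
    have szero: "\<forall>i<n. s i = 0"
    proof (intro allI impI)
      fix i assume i: "i < n"
      have "s i * cc (j0 - 1) (k0 - 1) = 0"
        using E1[OF i, of "j0 - 1" "k0 - 1"] jk rzero by simp
      moreover have "cc (j0 - 1) (k0 - 1) \<noteq> 0" using jk by (simp add: cc_def)
      ultimately show "s i = 0" by simp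
    qed
    have E2: "(\<Sum>t<n. D i t * Af t l) = a * (\<Sum>q<n. Af i q * D q l)"
      if i: "i < n" and l: "l < n" for i l
    proof -
      have w: "(0, Suc l) \<in> wpairs n" using l by (auto simp: wpairs_def)
      have "(\<Sum>t<n. D i t * Af t l) = fmap n b c ?A (row g (Suc i)) (0, Suc l)"
        using fmap_row[of "Suc i" 0 "Suc l"] i szero unfolding sum_1n
        by (simp add: s_def D_def Af_def)
      also have "\<dots> = (\<Sum>(p,q)\<in>wpairs n. fmap n b c ?A (unit_vec ?N (Suc i)) (p,q) * (G p 0 * G q (Suc l) - G p (Suc l) * G q 0))"
        using beq[of "Suc i" 0 "Suc l"] i w by simp
      also have "\<dots> = (\<Sum>q\<in>{1..n}. fmap n b c ?A (unit_vec ?N (Suc i)) (0,q) * (G 0 0 * G q (Suc l) - G 0 (Suc l) * G q 0))"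
        by (rule wpairs_sum) (use i fmap_unit in auto)
      also have "\<dots> = (\<Sum>q<n. Af i q * (a * D q l - r l * s q))"
        unfolding sum_1n using i by (simp add: fmap_unit' Af_def r_def D_def a_def s_def)
      also have "\<dots> = a * (\<Sum>q<n. Af i q * D q l)"
        using rzero l by (simp add: sum_distrib_left mult.left_commute)
      finally show ?thesis .
    qed
    have Eb: "a * bb l = a * (\<Sum>q<n. bb q * D q l)" if l: "l < n" for l
    proof -
      have w: "(0, Suc l) \<in> wpairs n" using l by (auto simp: wpairs_def)
      have "a * bb l = fmap n b c ?A (row g 0) (0, Suc l)"
        using fmap_row[of 0 0 "Suc l"] rzero unfolding sum_1n
        by (simp add: a_def bb_def r_def)
      also have "\<dots> = (\<Sum>(p,q)\<in>wpairs n. fmap n b c ?A (unit_vec ?N 0) (p,q) * (G p 0 * G q (Suc l) - G p (Suc l) * G q 0))"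
        using beq[of 0 0 "Suc l"] w by simp
      also have "\<dots> = (\<Sum>q\<in>{1..n}. fmap n b c ?A (unit_vec ?N 0) (0,q) * (G 0 0 * G q (Suc l) - G 0 (Suc l) * G q 0))"
      proof (rule wpairs_sum)
        fix p q assume pq: "(p,q) \<in> wpairs n" "p \<noteq> 0"
        then have pq2: "0 < p" "p < q" "q \<le> n" by (auto simp: wpairs_def)
        have "G p 0 = s (p - 1)" "G q 0 = s (q - 1)" using pq2 by (simp_all add: s_def)
        moreover have "s (p - 1) = 0" "s (q - 1) = 0" using szero pq2 by auto
        ultimately have "G p 0 = 0" "G q 0 = 0" by simp_all
        then show "fmap n b c ?A (unit_vec ?N 0) (p,q) * (G p 0 * G q (Suc l) - G p (Suc l) * G q 0) = 0" by simp
      qed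
      also have "\<dots> = (\<Sum>q<n. bb q * (a * D q l - r l * s q))"
        unfolding sum_1n by (simp add: fmap_unit' bb_def r_def D_def a_def s_def)
      also have "\<dots> = a * (\<Sum>q<n. bb q * D q l)"
        using rzero l by (simp add: sum_distrib_left mult.left_commute)
      finally show ?thesis .
    qed
    have anz: "a \<noteq> 0"
    proof
      assume "a = 0"
      have "\<forall>j<?N. g $$ (0,j) = 0"
      proof (intro allI impI)
        fix j assume "j < ?N"
        then show "g $$ (0,j) = 0" using rzero \<open>a = 0\<close>
          by (cases j) (auto simp: a_def r_def G_def)
      qed
      then have "det g = 0" using det_zero_row[OF gc, of 0] by simp
      then show False using inv_det[OF gc inv] by simp
    qed
    have eqb: "bb l = (\<Sum>q<n. bb q * D q l)" if "l < n" for l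
      using Eb[OF that] anz by simp
    have bnz: "\<exists>l<n. bb l \<noteq> 0"
    proof -
      obtain i where i: "i \<in> {1..n}" "b i \<noteq> 0" using assms(8) by auto
      then have "bb (i - 1) \<noteq> 0" "i - 1 < n" by (auto simp: bb_def)
      then show ?thesis by blast
    qed
    have inj: "\<forall>j<n. u j = 0" if "(\<Sum>j<n. e (u j) * \<alpha> ^ j) = 0" for u
      using min_poly_inj[OF e assms(7), of n u] that dm n3 by auto
    have rel: "\<alpha> ^ n = - (\<Sum>j<n. e (coeff m j) * \<alpha> ^ j)"
      using min_poly_rel[OF e assms(7)] dm by simp
    have fin: "a = 1 \<and> (\<forall>i<n. \<forall>j<n. D i j = (if i = j then 1 else 0))"
      by (rule final_part[OF e assms(6) _ inj comp rel E2 eqb bnz anz]) (use n3 in auto)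
    have "g = 1\<^sub>m ?N"
    proof (rule eq_matI)
      fix i j assume "i < dim_row (1\<^sub>m ?N)" "j < dim_col (1\<^sub>m ?N)"
      then have ij: "i < ?N" "j < ?N" by auto
      show "g $$ (i,j) = 1\<^sub>m ?N $$ (i,j)"
      proof (cases i)
        case 0 then show ?thesis using ij fin rzero
          by (cases j) (auto simp: a_def r_def G_def)
      next
        case (Suc i')
        then show ?thesis using ij fin szero
          by (cases j) (auto simp: D_def s_def G_def)
      qed
    qed (use gc in auto)
    then show "g \<in> {1\<^sub>m ?N}" by simp
  next
    fix g :: "'a mat" assume "g \<in> {1\<^sub>m ?N}"
    then have g: "g = 1\<^sub>m ?N" by simp
    have inv1: "invertible_mat (1\<^sub>m ?N :: 'a mat)"
    proof -
      have "(1\<^sub>m ?N :: 'a mat) * 1\<^sub>m ?N = 1\<^sub>m ?N" by (rule left_mult_one_mat) auto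
      then show ?thesis unfolding invertible_mat_def inverts_mat_def square_mat.simps
        by (intro conjI exI[of _ "1\<^sub>m ?N"]) auto
    qed
    have rm: "rmult v (1\<^sub>m ?N) = v" if v: "v \<in> carrier_vec ?N" for v :: "'a vec"
    proof (rule eq_vecI)
      fix j assume "j < dim_vec v"
      then have j: "j < ?N" using v by simp
      have "(\<Sum>i<dim_vec v. v $ i * 1\<^sub>m ?N $$ (i, j)) = (\<Sum>i<?N. if i = j then v $ j else 0)"
        by (rule sum.cong) (use v j in auto)
      also have "\<dots> = v $ j" using j by (simp add: sum.delta)
      finally show "rmult v (1\<^sub>m ?N) $ j = v $ j" using j by (simp add: rmult_def)
    qed (use v in \<open>simp add: rmult_def\<close>)
    have ht: "hat n (1\<^sub>m ?N) w kl = w kl" if kl: "kl \<in> wpairs n" for w :: "nat \<times> nat \<Rightarrow> 'a" and kl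
    proof -
      obtain k l where kl': "kl = (k,l)" by (cases kl)
      have kl2: "k < l" "l \<le> n" using kl kl' by (auto simp: wpairs_def)
      have "hat n (1\<^sub>m ?N) w kl = (\<Sum>x\<in>wpairs n. if x = (k,l) then w x else 0)"
        unfolding hat_def kl'
      proof (rule sum.cong)
        fix x assume x: "x \<in> wpairs n"
        obtain i j where ij: "x = (i,j)" by (cases x)
        have "i < j" "j \<le> n" using x ij by (auto simp: wpairs_def)
        then show "(case x of (i,j) \<Rightarrow> w (i,j) * wedge (row (1\<^sub>m ?N) i) (row (1\<^sub>m ?N) j) (k,l)) =
                   (if x = (k,l) then w x else 0)"
          using ij kl2 by (auto simp: wedge_def)
      qed simp
      also have "\<dots> = w kl" using kl kl' wpairs_finite by (simp add: sum.delta)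
      finally show ?thesis .
    qed
    show "g \<in> ?S" using g inv1 rm ht by simp
  qed
qed

end
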